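(* Let $d\ge2$ and $O_+=\sum_{\vec a\in\mathbb{Z}_d^3}\big[1+(-d)^{wt(\vec a)-1}\big]|\vec a\rangle\langle\vec a|$ on $(\mathbb{C}^d)^{\otimes3}$. For every density operator $\rho$ on $\mathbb{C}^d$, $$\mathrm{Tr}[\Phi^3(O_+^2)\rho^{\otimes3}]=\frac{1}{d+2}\Big\{(d-1)(d^2+3d+4)+3d(d-1)(d+1)\mathrm{Tr}[\rho^2]+2(d^3-d^2+6)\mathrm{Tr}[\rho^3]\Big\}.$$
   Context: $wt(\vec a)$ is the largest number of equal entries of $\vec a=(a_1,a_2,a_3)$ (1 if pairwise distinct, 2 if exactly two coincide, 3 if all coincide). $\Phi^3(X)=\int dU\,U^{\otimes3}XU^{\dagger\otimes3}$ with $U$ drawn from the Haar measure on $U(d)$ or from any unitary 3-design. *)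

theory Defs
  imports "HOL-Probability.Probability"
begin

text \<open>Operators on C^d are complex d x d matrices indexed by a finite type 'n with CARD('n) = d.
  Operators on the threefold tensor product (C^d)^{\<otimes>3} are matrices indexed by 'n \<times> 'n \<times> 'n;
  the computational basis vector |a1 a2 a3> corresponds to the index (a1, a2, a3).\<close>

definition cadj :: "complex^'m^'m \<Rightarrow> complex^'m^'m" where
  "cadj A = (\<chi> i j. cnj (A $ j $ i))"

definition unitary_mat :: "complex^'n^'n \<Rightarrow> bool" where
  "unitary_mat U \<longleftrightarrow> cadj U ** U = mat 1"

definition tensor3 :: "complex^'n^'n \<Rightarrow> complex^('n \<times> 'n \<times> 'n)^('n \<times> 'n \<times> 'n)" where
  "tensor3 A = (\<chi> i j. A $ fst i $ fst j * A $ fst (snd i) $ fst (snd j)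
                         * A $ snd (snd i) $ snd (snd j))"

definition density_op :: "complex^'n^'n \<Rightarrow> bool" where
  "density_op \<rho> \<longleftrightarrow> cadj \<rho> = \<rho>
     \<and> (\<forall>x :: complex^'n. 0 \<le> Re (\<Sum>i\<in>UNIV. \<Sum>j\<in>UNIV. cnj (x $ i) * \<rho> $ i $ j * x $ j))
     \<and> trace \<rho> = 1"

definition haar_unitary :: "(complex^'n^'n) measure \<Rightarrow> bool" where
  "haar_unitary \<mu> \<longleftrightarrow> prob_space \<mu> \<and> sets \<mu> = sets borel
     \<and> emeasure \<mu> {U. unitary_mat U} = 1
     \<and> (\<forall>V. unitary_mat V \<longrightarrow> distr \<mu> borel (\<lambda>U. V ** U) = \<mu>)"

definition Phi3 :: "(complex^'n^'n) measure \<Rightarrow> complex^('n \<times> 'n \<times> 'n)^('n \<times> 'n \<times> 'n)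
                     \<Rightarrow> complex^('n \<times> 'n \<times> 'n)^('n \<times> 'n \<times> 'n)" where
  "Phi3 \<mu> X = integral\<^sup>L \<mu> (\<lambda>U. tensor3 U ** X ** cadj (tensor3 U))"

definition unitary_3design :: "(complex^'n^'n) measure \<Rightarrow> bool" where
  "unitary_3design \<mu> \<longleftrightarrow> prob_space \<mu> \<and> sets \<mu> = sets borel
     \<and> (AE U in \<mu>. unitary_mat U)
     \<and> (\<exists>\<nu>. haar_unitary \<nu> \<and> (\<forall>X. Phi3 \<mu> X = Phi3 \<nu> X))"

definition wt :: "'a \<times> 'a \<times> 'a \<Rightarrow> nat" where
  "wt a = (case a of (a1, a2, a3) \<Rightarrow>
     (if a1 = a2 \<and> a2 = a3 then 3 else if a1 = a2 \<or> a2 = a3 \<or> a1 = a3 then 2 else 1))"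

definition O_plus :: "complex^('n::finite \<times> 'n \<times> 'n)^('n \<times> 'n \<times> 'n)" where
  "O_plus = (\<chi> a b. if a = b then 1 + (- of_nat CARD('n)) ^ (wt a - 1) else 0)"

end

theory Submission
  imports Defs
begin

lemma unitary_col_norm:
  fixes U :: "complex^'n^'n"
  assumes "unitary_mat U"
  shows "(\<Sum>a\<in>UNIV. cnj (U$a$i) * U$a$i) = 1"
proof -
  have "(cadj U ** U)$i$i = 1" using assms by (simp add: unitary_mat_def mat_def)
  thus ?thesis by (simp add: cadj_def matrix_matrix_mult_def)
qed

lemma unitary_col_norm_real:
  fixes U :: "complex^'n^'n"
  assumes "unitary_mat U"
  shows "(\<Sum>a\<in>UNIV. (norm (U$a$i))^2) = 1"
proof -
  have "complex_of_real (\<Sum>a\<in>UNIV. (norm (U$a$i))^2) = (\<Sum>a\<in>UNIV. cnj (U$a$i) * U$a$i)"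
    unfolding of_real_sum by (intro sum.cong refl) (metis complex_norm_square mult.commute)
  then show ?thesis by (simp only: unitary_col_norm[OF assms] of_real_eq_1_iff)
qed

lemma unitary_entry_bound:
  fixes U :: "complex^'n^'n"
  assumes "unitary_mat U"
  shows "norm (U$a$i) \<le> 1"
proof -
  have "(norm (U$a$i))^2 \<le> (\<Sum>a\<in>UNIV. (norm (U$a$i))^2)"
    by (rule member_le_sum) auto
  hence "(norm (U$a$i))^2 \<le> 1" using unitary_col_norm_real[OF assms] by simp
  thus ?thesis by (simp add: power_le_one_iff abs_le_square_iff)
qed

lemma norm_vec_le_sum: "norm (x :: 'a::real_normed_vector^'m) \<le> (\<Sum>i\<in>UNIV. norm (x$i))"
  unfolding norm_vec_def by (rule L2_set_le_sum) auto

lemma unitary_set_closed: "closed {U::complex^'n^'n. unitary_mat U}"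
proof -
  have "{U::complex^'n^'n. unitary_mat U} =
     {U. \<forall>a b. (\<Sum>k\<in>UNIV. cnj (U$k$a) * U$k$b) = (if a = b then 1 else 0)}"
    by (auto simp: unitary_mat_def vec_eq_iff cadj_def matrix_matrix_mult_def mat_def)
  also have "closed \<dots>"
    by (intro closed_Collect_all closed_Collect_eq continuous_intros)
  finally show ?thesis .
qed

lemma unitary_set_bounded: "bounded {U::complex^'n^'n. unitary_mat U}"
proof -
  have "norm U \<le> real CARD('n) * real CARD('n)" if "unitary_mat U" for U :: "complex^'n^'n"
  proof -
    have "norm U \<le> (\<Sum>a\<in>UNIV. norm (U$a))" by (rule norm_vec_le_sum)
    also have "\<dots> \<le> (\<Sum>a\<in>UNIV. (\<Sum>b\<in>UNIV. norm (U$a$b)))"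
      by (intro sum_mono norm_vec_le_sum)
    also have "\<dots> \<le> (\<Sum>a\<in>(UNIV::'n set). (\<Sum>b\<in>(UNIV::'n set). 1))"
      by (intro sum_mono unitary_entry_bound that)
    finally show ?thesis by simp
  qed
  thus ?thesis unfolding bounded_iff by blast
qed

lemma unitary_set_compact: "compact {U::complex^'n^'n. unitary_mat U}"
  using unitary_set_closed unitary_set_bounded compact_eq_bounded_closed by blast

lemma cont_bounded_unitary:
  fixes g :: "complex^'n^'n \<Rightarrow> 'b::real_normed_vector"
  assumes "continuous_on UNIV g"
  shows "\<exists>B. \<forall>U. unitary_mat U \<longrightarrow> norm (g U) \<le> B"
proof -
  have "compact (g ` {U. unitary_mat U})"
    by (rule compact_continuous_image[OF continuous_on_subset[OF assms] unitary_set_compact]) auto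
  hence "bounded (g ` {U. unitary_mat U})" by (rule compact_imp_bounded)
  thus ?thesis unfolding bounded_iff by auto
qed

lemma haar_AE_unitary:
  assumes "haar_unitary \<mu>"
  shows "AE U in \<mu>. unitary_mat U"
proof -
  have ps: "prob_space \<mu>" using assms by (simp add: haar_unitary_def)
  have "measure \<mu> {U. unitary_mat U} = 1"
    using assms by (simp add: haar_unitary_def measure_def)
  hence "AE U in \<mu>. U \<in> {U. unitary_mat U}" by (rule prob_space.AE_prob_1[OF ps])
  thus ?thesis by simp
qed

lemma cont_integrable:
  fixes g :: "complex^'n^'n \<Rightarrow> 'b::{banach,second_countable_topology}"
  assumes "prob_space \<mu>" "sets \<mu> = sets borel" "AE U in \<mu>. unitary_mat U"
    and "continuous_on UNIV g"
  shows "integrable \<mu> g"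
proof -
  obtain B where B: "\<And>U. unitary_mat U \<Longrightarrow> norm (g U) \<le> B"
    using cont_bounded_unitary[OF assms(4)] by blast
  have "AE U in \<mu>. norm (g U) \<le> B" using assms(3) by (auto intro: B)
  moreover have "g \<in> borel_measurable \<mu>"
    by (subst measurable_cong_sets[OF assms(2) refl]) (rule borel_measurable_continuous_onI[OF assms(4)])
  ultimately show ?thesis
    using prob_space.axioms(1)[OF assms(1)] finite_measure.integrable_const_bound by blast
qed

lemma haar_integrable:
  fixes g :: "complex^'n^'n \<Rightarrow> 'b::{banach,second_countable_topology}"
  assumes "haar_unitary \<mu>" "continuous_on UNIV g"
  shows "integrable \<mu> g"
  using assms haar_AE_unitary[OF assms(1)] cont_integrable
  by (metis haar_unitary_def)

lemma cont_mult_left: "continuous_on UNIV (\<lambda>U::complex^'n^'n. V ** U)"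
  unfolding matrix_matrix_mult_def by (intro continuous_intros)

lemma haar_invariant:
  fixes g :: "complex^'n^'n \<Rightarrow> complex"
  assumes "haar_unitary \<mu>" "unitary_mat V" "continuous_on UNIV g"
  shows "integral\<^sup>L \<mu> (\<lambda>U. g (V ** U)) = integral\<^sup>L \<mu> g"
proof -
  have eq: "distr \<mu> borel (\<lambda>U. V ** U) = \<mu>" and s: "sets \<mu> = sets borel"
    using assms by (auto simp: haar_unitary_def)
  have m: "(\<lambda>U. V ** U) \<in> measurable \<mu> borel"
    by (subst measurable_cong_sets[OF s refl]) (rule borel_measurable_continuous_onI[OF cont_mult_left])
  have "integral\<^sup>L \<mu> g = integral\<^sup>L (distr \<mu> borel (\<lambda>U. V ** U)) g" using eq by simp
  also have "\<dots> = integral\<^sup>L \<mu> (\<lambda>U. g (V ** U))"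
    by (rule integral_distr[OF m borel_measurable_continuous_onI[OF assms(3)]])
  finally show ?thesis by simp
qed


lemma ifz_mult[simp]: "(if P then x else 0) * (y::'a::semiring_0) = (if P then x * y else 0)"
  by simp
lemma mult_ifz[simp]: "(y::'a::semiring_0) * (if P then x else 0) = (if P then y * x else 0)"
  by simp

definition diagm :: "('n::finite \<Rightarrow> complex) \<Rightarrow> complex^'n^'n" where
  "diagm \<theta> = (\<chi> a b. if a = b then \<theta> a else 0)"

lemma diagm_mult[simp]: "(diagm \<theta> ** U)$a$j = \<theta> a * U$a$j"
  by (simp add: diagm_def matrix_matrix_mult_def cong: if_cong)

lemma diagm_unitary: "(\<And>a. cnj (\<theta> a) * \<theta> a = 1) \<Longrightarrow> unitary_mat (diagm \<theta>)"
  unfolding unitary_mat_def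
  by (simp add: vec_eq_iff cadj_def diagm_def matrix_matrix_mult_def mat_def cong: if_cong)

definition sw :: "'a \<Rightarrow> 'a \<Rightarrow> 'a \<Rightarrow> 'a" where
  "sw p q a = (if a = p then q else if a = q then p else a)"

lemma sw_eq: "(a = sw p q c) = (c = sw p q a)"
  by (auto simp: sw_def)

lemma sw_sw[simp]: "sw p q (sw p q a) = a"
  by (auto simp: sw_def)

lemma sum_sw[simp]: "(\<Sum>k\<in>(UNIV::'a::finite set). if a = sw p q k then f k else 0) = f (sw p q a)"
  by (simp only: sw_eq[of a] sum.delta) simp

lemma cnj_if01[simp]: "cnj (if P then 1 else 0) = (if P then 1 else 0)"
  by simp

definition swapm :: "'n::finite \<Rightarrow> 'n \<Rightarrow> complex^'n^'n" where
  "swapm p q = (\<chi> a b. if b = sw p q a then 1 else 0)"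

lemma swapm_mult[simp]: "(swapm p q ** U)$a$j = U$(sw p q a)$j"
  by (simp add: swapm_def matrix_matrix_mult_def cong: if_cong)

lemma swapm_unitary: "unitary_mat (swapm p q)"
  unfolding unitary_mat_def
  by (simp add: vec_eq_iff cadj_def swapm_def matrix_matrix_mult_def mat_def cong: if_cong)

definition rs :: complex where "rs = complex_of_real (1 / sqrt 2)"

lemma rs_sq: "rs * rs = 1/2"
  by (simp add: rs_def flip: of_real_mult)

lemma rs_rs: "rs * (rs * c) = c / 2"
  by (simp add: mult.assoc[symmetric] rs_sq)

lemma cnj_rs[simp]: "cnj rs = rs" by (simp add: rs_def)

definition rotm :: "'n::finite \<Rightarrow> 'n \<Rightarrow> complex^'n^'n" where
  "rotm p q = (\<chi> a c. if a = p then rs * ((if c = p then 1 else 0) + (if c = q then 1 else 0))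
     else if a = q then rs * ((if c = p then 1 else 0) - (if c = q then 1 else 0))
     else (if a = c then 1 else 0))"

lemma rotm_mult_p: "p \<noteq> q \<Longrightarrow> (rotm p q ** U)$p$j = rs * (U$p$j + U$q$j)"
  by (simp add: rotm_def matrix_matrix_mult_def distrib_left distrib_right sum.distrib cong: if_cong)

lemma rotm_cadj: "p \<noteq> q \<Longrightarrow> cadj (rotm p q) = rotm p q"
  by (auto simp: vec_eq_iff cadj_def rotm_def)

lemma rotm_row:
  assumes "p \<noteq> q"
  shows "(\<Sum>c\<in>UNIV. rotm p q $ a $ c * f c) =
    (if a = p then rs * (f p + f q) else if a = q then rs * (f p - f q) else f a)"
proof (cases "a = p")
  case True
  then show ?thesis
    by (simp add: rotm_def distrib_left distrib_right sum.distrib flip: sum_distrib_left)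
next
  case False
  then show ?thesis
    by (cases "a = q") (simp_all add: rotm_def algebra_simps sum.distrib sum_subtractf assms flip: sum_distrib_left)
qed

lemma rotm_sq: assumes "p \<noteq> q" shows "rotm p q ** rotm p q = mat 1"
  using assms unfolding vec_eq_iff matrix_matrix_mult_def
  apply (simp only: vec_lambda_beta rotm_row[OF assms])
  apply (auto simp: rotm_def mat_def rs_sq rs_rs algebra_simps)
  done

lemma rotm_unitary: "p \<noteq> q \<Longrightarrow> unitary_mat (rotm p q)"
  by (simp add: unitary_mat_def rotm_cadj rotm_sq)


lemma avg6:
  fixes a b A B :: complex
  shows "((1*a+b)*(cnj 1*A+B))^3 + ((\<i>*a+b)*(cnj \<i>*A+B))^3 + ((-1*a+b)*(cnj (-1)*A+B))^3
     + ((-\<i>*a+b)*(cnj (-\<i>)*A+B))^3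
     = 4*((a*A + b*B)^3 + 6*(a*A)*(b*B)*(a*A + b*B))"
proof -
  have h: "\<i> * \<i> = (-1::complex)" by simp
  show ?thesis using h
    apply (simp only: complex_cnj_one complex_cnj_i complex_cnj_minus)
    by algebra
qed

lemma avg4:
  fixes a b A B :: complex
  shows "((1*a+b)*(cnj 1*A+B))^2 + ((\<i>*a+b)*(cnj \<i>*A+B))^2 + ((-1*a+b)*(cnj (-1)*A+B))^2
     + ((-\<i>*a+b)*(cnj (-\<i>)*A+B))^2
     = 4*((a*A + b*B)^2 + 2*(a*A)*(b*B))"
proof -
  have h: "\<i> * \<i> = (-1::complex)" by simp
  show ?thesis using h
    apply (simp only: complex_cnj_one complex_cnj_i complex_cnj_minus)
    by algebra
qed

definition KK :: "complex \<Rightarrow> complex" where "KK d = 1 / (d * (d + 1) * (d + 2))"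

lemma ar_m2:
  fixes d m :: complex
  assumes "d \<noteq> 0" "d + 1 \<noteq> 0" "m + (d - 1) * (m / 2) = 1 / d"
  shows "m = 2 / (d * (d + 1))"
proof -
  have "m * (d + 1) = 2 / d" using assms(3) by (simp add: field_simps)
  hence "m = (2 / d) / (d + 1)" using assms(2) by (metis nonzero_mult_div_cancel_right)
  thus ?thesis by (simp add: divide_divide_eq_left)
qed

lemma ar_m3:
  fixes d m :: complex
  assumes "d \<noteq> 0" "d + 1 \<noteq> 0" "d + 2 \<noteq> 0" "m + (d - 1) * (m / 3) = 2 / (d * (d + 1))"
  shows "m = 6 * KK d"
proof -
  have "m * (d + 2) = 6 / (d * (d + 1))" using assms(4) assms(1,2) by (simp add: field_simps)
  hence "m = (6 / (d * (d + 1))) / (d + 2)" using assms(3) by (metis nonzero_mult_div_cancel_right)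
  thus ?thesis by (simp add: divide_divide_eq_left KK_def)
qed

lemma ar_half: assumes "2 * (x::complex) = 2 / y" shows "x = 1 / y"
proof -
  have "x = (2 / y) / 2" using assms by (metis nonzero_mult_div_cancel_left zero_neq_numeral)
  thus ?thesis by simp
qed

definition ph :: "'n \<Rightarrow> complex \<Rightarrow> 'n \<Rightarrow> complex" where
  "ph p w a = (if a = p then w else 1)"

definition cnt3 :: "'a \<Rightarrow> 'a \<Rightarrow> 'a \<Rightarrow> 'a \<Rightarrow> nat" where
  "cnt3 t a b c = (if a = t then 1 else 0) + (if b = t then 1 else 0) + (if c = t then 1 else 0)"

lemma cnt3_le: "cnt3 t a b c \<le> 3"
  by (simp add: cnt3_def)

lemma phase_prod: "ph t \<i> a * ph t \<i> b * ph t \<i> c = \<i> ^ cnt3 t a b c"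
  by (auto simp: ph_def cnt3_def)

lemma phase_prod_cnj: "cnj (ph t \<i> a) * cnj (ph t \<i> b) * cnj (ph t \<i> c) = (-\<i>) ^ cnt3 t a b c"
  by (auto simp: ph_def cnt3_def)

lemma pow_eq:
  assumes "n \<le> 3" "m \<le> 3" "\<i> ^ n * (-\<i>) ^ m = 1"
  shows "n = m"
proof -
  have "n \<in> {0,1,2,3}" "m \<in> {0,1,2,3}" using assms(1,2) by auto
  moreover have "- \<i> \<noteq> (1::complex)" by (simp add: complex_eq_iff)
  ultimately show ?thesis using assms(3) by (auto simp: power_numeral_odd power_numeral_even numeral_3_eq_3)
qed

lemma match3:
  assumes "\<forall>t\<in>{a,b,c,a',b',c'}. cnt3 t a b c = cnt3 t a' b' c'"
  shows "(a'=a \<and> b'=b \<and> c'=c) \<or> (a'=a \<and> b'=c \<and> c'=b) \<or> (a'=b \<and> b'=a \<and> c'=c) \<or>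
         (a'=b \<and> b'=c \<and> c'=a) \<or> (a'=c \<and> b'=a \<and> c'=b) \<or> (a'=c \<and> b'=b \<and> c'=a)"
  using assms by (auto simp: cnt3_def split: if_splits)

definition cnt2 :: "'a \<Rightarrow> 'a \<Rightarrow> 'a \<Rightarrow> nat" where
  "cnt2 t a b = (if a = t then 1 else 0) + (if b = t then 1 else 0)"

lemma cnt2_le: "cnt2 t a b \<le> 3"
  by (simp add: cnt2_def)

lemma phase_prod2: "ph t \<i> a * ph t \<i> b = \<i> ^ cnt2 t a b"
  by (auto simp: ph_def cnt2_def)

lemma phase_prod2_cnj: "cnj (ph t \<i> a) * cnj (ph t \<i> b) = (-\<i>) ^ cnt2 t a b"
  by (auto simp: ph_def cnt2_def)

lemma match2:
  assumes "\<forall>t\<in>{a,b,a',b'}. cnt2 t a b = cnt2 t a' b'"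
  shows "(a'=a \<and> b'=b) \<or> (a'=b \<and> b'=a)"
  using assms by (auto simp: cnt2_def split: if_splits)

definition R3 :: "'a \<Rightarrow> 'a \<Rightarrow> 'a \<Rightarrow> 'a \<Rightarrow> 'a \<Rightarrow> 'a \<Rightarrow> complex" where
  "R3 a b c a' b' c' =
     (if a'=a \<and> b'=b \<and> c'=c then 1 else 0) + (if a'=a \<and> b'=c \<and> c'=b then 1 else 0)
   + (if a'=b \<and> b'=a \<and> c'=c then 1 else 0) + (if a'=b \<and> b'=c \<and> c'=a then 1 else 0)
   + (if a'=c \<and> b'=a \<and> c'=b then 1 else 0) + (if a'=c \<and> b'=b \<and> c'=a then 1 else 0)"

definition R2 :: "'a \<Rightarrow> 'a \<Rightarrow> 'a \<Rightarrow> 'a \<Rightarrow> complex" where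
  "R2 a b a' b' = (if a'=a \<and> b'=b then 1 else 0) + (if a'=b \<and> b'=a then 1 else 0)"

lemma R3_id: "R3 a b c a b c = (if a=b \<and> b=c then 6 else if a=b \<or> b=c \<or> a=c then 2 else 1)"
  by (cases "a = b"; cases "b = c"; cases "a = c") (simp_all add: R3_def)
lemma R3_p2: "R3 a b c a c b = R3 a b c a b c"
  by (cases "a = b"; cases "b = c"; cases "a = c") (simp_all add: R3_def)
lemma R3_p3: "R3 a b c b a c = R3 a b c a b c"
  by (cases "a = b"; cases "b = c"; cases "a = c") (simp_all add: R3_def)
lemma R3_p4: "R3 a b c b c a = R3 a b c a b c"
  by (cases "a = b"; cases "b = c"; cases "a = c") (simp_all add: R3_def)
lemma R3_p5: "R3 a b c c a b = R3 a b c a b c"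
  by (cases "a = b"; cases "b = c"; cases "a = c") (simp_all add: R3_def)
lemma R3_p6: "R3 a b c c b a = R3 a b c a b c"
  by (cases "a = b"; cases "b = c"; cases "a = c") (simp_all add: R3_def)
lemma R3_zero:
  assumes "\<not> ((a'=a \<and> b'=b \<and> c'=c) \<or> (a'=a \<and> b'=c \<and> c'=b) \<or> (a'=b \<and> b'=a \<and> c'=c) \<or>
         (a'=b \<and> b'=c \<and> c'=a) \<or> (a'=c \<and> b'=a \<and> c'=b) \<or> (a'=c \<and> b'=b \<and> c'=a))"
  shows "R3 a b c a' b' c' = 0"
proof -
  have c: "(a'=a \<and> b'=b \<and> c'=c) = False" "(a'=a \<and> b'=c \<and> c'=b) = False" "(a'=b \<and> b'=a \<and> c'=c) = False"
    "(a'=b \<and> b'=c \<and> c'=a) = False" "(a'=c \<and> b'=a \<and> c'=b) = False" "(a'=c \<and> b'=b \<and> c'=a) = False"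
    using assms by blast+
  show ?thesis unfolding R3_def by (simp only: c if_False) simp
qed

lemma R2_zero:
  assumes "\<not> ((a'=a \<and> b'=b) \<or> (a'=b \<and> b'=a))"
  shows "R2 a b a' b' = 0"
proof -
  have c: "(a'=a \<and> b'=b) = False" "(a'=b \<and> b'=a) = False" using assms by blast+
  show ?thesis unfolding R2_def by (simp only: c if_False) simp
qed
lemma R2_id: "R2 a b a b = (if a = b then 2 else 1)" by (simp add: R2_def)
lemma R2_sw: "R2 a b b a = (if a = b then 2 else 1)" by (simp add: R2_def)

lemma phase_ne:
  assumes "n \<le> 3" "m \<le> 3" "n \<noteq> m" "x = \<i> ^ n * (-\<i>) ^ m * x"
  shows "x = (0::complex)"
proof -
  have "\<i> ^ n * (-\<i>) ^ m \<noteq> 1" using pow_eq assms(1-3) by blast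
  moreover have "(1 - \<i> ^ n * (-\<i>) ^ m) * x = 0" using assms(4) by (simp add: algebra_simps)
  ultimately show ?thesis by simp
qed

lemma if_conj01: "(if P \<and> Q then 1 else 0) = (if P then (if Q then 1 else (0::complex)) else 0)"
  by simp
lemma sum_ifP[simp]: "(\<Sum>x\<in>A. if P then g x else 0) = (if P then (\<Sum>x\<in>A. g x) else (0::'b::comm_monoid_add))"
  by simp

lemma sum4_R2:
  fixes f :: "'n::finite \<Rightarrow> 'n \<Rightarrow> complex"
  shows "(\<Sum>a\<in>UNIV. \<Sum>b\<in>UNIV. \<Sum>c\<in>UNIV. \<Sum>e\<in>UNIV. f a b * f c e * R2 b e a c)
     = (\<Sum>a\<in>UNIV. f a a)^2 + (\<Sum>a\<in>UNIV. \<Sum>c\<in>UNIV. f a c * f c a)"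
  by (simp add: R2_def if_conj01 distrib_left sum.distrib power2_eq_square sum_product)

lemma sum6_R3:
  fixes f :: "'n::finite \<Rightarrow> 'n \<Rightarrow> complex"
  shows "(\<Sum>a\<in>UNIV. \<Sum>b\<in>UNIV. \<Sum>c\<in>UNIV. \<Sum>e\<in>UNIV. \<Sum>h\<in>UNIV. \<Sum>g\<in>UNIV. f a b * f c e * f h g * R3 b e g a c h)
     = (\<Sum>a\<in>UNIV. f a a)^3 + 3 * (\<Sum>a\<in>UNIV. f a a) * (\<Sum>a\<in>UNIV. \<Sum>c\<in>UNIV. f a c * f c a)
       + 2 * (\<Sum>a\<in>UNIV. \<Sum>c\<in>UNIV. \<Sum>e\<in>UNIV. f a c * f c e * f e a)"
proof -
  define T1 where "T1 = (\<Sum>a\<in>UNIV. f a a)"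
  define T2 where "T2 = (\<Sum>a\<in>UNIV. \<Sum>c\<in>UNIV. f a c * f c a)"
  define T3 where "T3 = (\<Sum>a\<in>UNIV. \<Sum>c\<in>UNIV. \<Sum>e\<in>UNIV. f a c * f c e * f e a)"
  have p1: "(\<Sum>a\<in>UNIV. \<Sum>c\<in>UNIV. \<Sum>h\<in>UNIV. f a a * f c c * f h h) = T1 * (T1 * T1)"
    unfolding T1_def
    apply (simp only: sum_distrib_right)
    apply (simp only: sum_distrib_left)?
    apply (simp add: mult_ac)?
    done
  have p2: "(\<Sum>a\<in>UNIV. \<Sum>c\<in>UNIV. \<Sum>e\<in>UNIV. f a a * f c e * f e c) = T1 * T2"
    unfolding T1_def T2_def
    apply (simp only: sum_distrib_right)
    apply (simp only: sum_distrib_left)?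
    apply (simp add: mult_ac)?
    done
  have p3: "(\<Sum>a\<in>UNIV. \<Sum>b\<in>UNIV. \<Sum>h\<in>UNIV. f a b * f b a * f h h) = T2 * T1"
    unfolding T1_def T2_def
    apply (simp only: sum_distrib_right)
    apply (simp only: sum_distrib_left)?
    apply (simp add: mult_ac)?
    done
  have p4: "(\<Sum>a\<in>UNIV. \<Sum>b\<in>UNIV. \<Sum>c\<in>UNIV. f a b * f c a * f b c) = T3"
    by (simp add: T3_def mult_ac)
  have p5: "(\<Sum>a\<in>UNIV. \<Sum>b\<in>UNIV. \<Sum>c\<in>UNIV. f a b * f c c * f b a) = T2 * T1"
    unfolding T1_def T2_def
    apply (simp only: sum_distrib_right)
    apply (simp only: sum_distrib_left)?
    apply (simp add: mult_ac)?
    done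
  have p6: "(\<Sum>a\<in>UNIV. \<Sum>b\<in>UNIV. \<Sum>c\<in>UNIV. f a b * f b c * f c a) = T3"
    by (simp add: T3_def mult_ac)
  have "(\<Sum>a\<in>UNIV. \<Sum>b\<in>UNIV. \<Sum>c\<in>UNIV. \<Sum>e\<in>UNIV. \<Sum>h\<in>UNIV. \<Sum>g\<in>UNIV. f a b * f c e * f h g * R3 b e g a c h)
     = T1^3 + 3 * T1 * T2 + 2 * T3"
    apply (simp add: R3_def if_conj01 distrib_left sum.distrib)
    apply (simp add: p1 p2 p3 p4 p5 p6)
    apply (simp add: power3_eq_cube algebra_simps)?
    done
  thus ?thesis by (simp add: T1_def T2_def T3_def)
qed

lemma trace_def2: "trace (A::complex^'n^'n) = (\<Sum>a\<in>UNIV. A$a$a)"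
  by (simp add: trace_def)

lemma trace_sq: "trace ((A::complex^'n^'n) ** A) = (\<Sum>a\<in>UNIV. \<Sum>c\<in>UNIV. A$a$c * A$c$a)"
  by (simp add: trace_def matrix_matrix_mult_def)

lemma trace_cube: "trace ((A::complex^'n^'n) ** A ** A) = (\<Sum>a\<in>UNIV. \<Sum>c\<in>UNIV. \<Sum>e\<in>UNIV. A$a$c * A$c$e * A$e$a)"
  apply (simp add: trace_def matrix_matrix_mult_def sum_distrib_right)
  apply (rule sum.cong[OF refl])
  apply (subst sum.swap)
  apply (simp add: mult_ac)
  done

definition qfc :: "'n::finite \<Rightarrow> complex^'n^'n \<Rightarrow> complex^'n^'n \<Rightarrow> complex" where
  "qfc i \<rho> U = (\<Sum>a\<in>UNIV. \<Sum>b\<in>UNIV. cnj (U$a$i) * \<rho>$a$b * U$b$i)"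

lemma sum_triple: "(\<Sum>x\<in>(UNIV::('n::finite\<times>'n\<times>'n) set). h x) = (\<Sum>a\<in>UNIV. \<Sum>b\<in>UNIV. \<Sum>c\<in>UNIV. h (a,b,c))"
  by (simp add: sum.cartesian_product)

lemma wsum:
  fixes f :: "'n::finite \<Rightarrow> complex" and \<beta> \<gamma> :: complex
  assumes "(\<Sum>c\<in>UNIV. f c) = 1"
  shows "(\<Sum>a\<in>UNIV. \<Sum>b\<in>UNIV. \<Sum>c\<in>UNIV.
     (4 + \<beta> * ((if a = b then 1 else 0) + (if b = c then 1 else 0) + (if a = c then 1 else 0))
        + \<gamma> * (if a = b \<and> b = c then 1 else 0)) * (f a * f b * f c))
   = 4 + 3 * \<beta> * (\<Sum>a\<in>UNIV. f a * f a) + \<gamma> * (\<Sum>a\<in>UNIV. f a * f a * f a)"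
proof -
  have s1: "(\<Sum>a\<in>UNIV. \<Sum>b\<in>UNIV. \<Sum>c\<in>UNIV. f a * f b * f c) = 1"
    by (simp add: sum_distrib_left[symmetric] sum_distrib_right[symmetric] assms)
  have s2: "(\<Sum>a\<in>UNIV. \<Sum>c\<in>UNIV. f a * f a * f c) = (\<Sum>a\<in>UNIV. f a * f a)"
    by (simp add: sum_distrib_left[symmetric] assms)
  have s3: "(\<Sum>a\<in>UNIV. \<Sum>b\<in>UNIV. f a * f b * f b) = (\<Sum>a\<in>UNIV. f a * f a)"
  proof -
    have "(\<Sum>a\<in>UNIV. \<Sum>b\<in>UNIV. f a * f b * f b) = (\<Sum>a\<in>UNIV. f a * (\<Sum>b\<in>UNIV. f b * f b))"
      by (simp add: sum_distrib_left mult.assoc)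
    also have "\<dots> = (\<Sum>a\<in>UNIV. f a) * (\<Sum>b\<in>UNIV. f b * f b)"
      by (simp add: sum_distrib_right)
    finally show ?thesis by (simp add: assms)
  qed
  have s4: "(\<Sum>a\<in>UNIV. \<Sum>b\<in>UNIV. f a * f b * f a) = (\<Sum>a\<in>UNIV. f a * f a)"
  proof -
    have "(\<Sum>a\<in>UNIV. \<Sum>b\<in>UNIV. f a * f b * f a) = (\<Sum>a\<in>UNIV. \<Sum>b\<in>UNIV. f a * f a * f b)"
      by (simp add: mult_ac)
    thus ?thesis by (simp add: sum_distrib_left[symmetric] assms)
  qed
  show ?thesis
    apply (simp add: if_conj01 distrib_left distrib_right sum.distrib)
    apply (simp add: sum_distrib_left[symmetric] s1 s2 s3 s4 assms)
    done
qed

locale haarcol =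
  fixes \<mu> :: "(complex^'n::finite^'n) measure" and i :: 'n
  assumes haar: "haar_unitary \<mu>"
begin

definition nx :: "'n \<Rightarrow> complex^'n^'n \<Rightarrow> complex" where
  "nx a U = U$a$i * cnj (U$a$i)"

lemma cont_nx[continuous_intros]: "continuous_on S (\<lambda>U. nx a U)"
  unfolding nx_def by (intro continuous_intros)

lemma integ:
  fixes g :: "complex^'n^'n \<Rightarrow> 'b::{banach,second_countable_topology}"
  shows "continuous_on UNIV g \<Longrightarrow> integrable \<mu> g"
  using haar_integrable[OF haar] .

lemma integ1[simp]: "integrable \<mu> (\<lambda>U. nx a U)"
  by (intro integ continuous_intros)
lemma integ2[simp]: "integrable \<mu> (\<lambda>U. nx a U * nx b U)"
  by (intro integ continuous_intros)
lemma integ3[simp]: "integrable \<mu> (\<lambda>U. nx a U * nx b U * nx c U)"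
  by (intro integ continuous_intros)

lemma sets_mu: "sets \<mu> = sets borel" using haar by (simp add: haar_unitary_def)
lemma prob: "prob_space \<mu>" using haar by (simp add: haar_unitary_def)

lemma meas:
  fixes g :: "complex^'n^'n \<Rightarrow> 'b::{banach,second_countable_topology}"
  shows "continuous_on UNIV g \<Longrightarrow> g \<in> borel_measurable \<mu>"
  by (subst measurable_cong_sets[OF sets_mu refl]) (rule borel_measurable_continuous_onI)

definition m1 where "m1 a = integral\<^sup>L \<mu> (\<lambda>U. nx a U)"
definition m2 where "m2 a b = integral\<^sup>L \<mu> (\<lambda>U. nx a U * nx b U)"
definition m3 where "m3 a b c = integral\<^sup>L \<mu> (\<lambda>U. nx a U * nx b U * nx c U)"

lemma nx_swap[simp]: "nx a (swapm p q ** U) = nx (sw p q a) U"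
  by (simp add: nx_def)

lemma inv_swap: "continuous_on UNIV (g :: complex^'n^'n \<Rightarrow> complex) \<Longrightarrow> integral\<^sup>L \<mu> (\<lambda>U. g (swapm p q ** U)) = integral\<^sup>L \<mu> g"
  by (rule haar_invariant[OF haar swapm_unitary])

lemma m1_swap: "m1 (sw p q a) = m1 a"
  using inv_swap[of "\<lambda>U. nx a U" p q] by (simp add: m1_def continuous_intros)
lemma m2_swap: "m2 (sw p q a) (sw p q b) = m2 a b"
  using inv_swap[of "\<lambda>U. nx a U * nx b U" p q] by (simp add: m2_def continuous_intros)
lemma m3_swap: "m3 (sw p q a) (sw p q b) (sw p q c) = m3 a b c"
  using inv_swap[of "\<lambda>U. nx a U * nx b U * nx c U" p q] by (simp add: m3_def continuous_intros)

lemma sum_nx: "unitary_mat U \<Longrightarrow> (\<Sum>a\<in>UNIV. nx a U) = 1"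
  using unitary_col_norm[of U i] by (simp add: nx_def mult.commute)

lemma AE_sum_nx: "AE U in \<mu>. (\<Sum>a\<in>UNIV. nx a U) = 1"
  using haar_AE_unitary[OF haar] by (rule eventually_mono) (rule sum_nx)

lemma sum_m1: "(\<Sum>a\<in>UNIV. m1 a) = 1"
proof -
  have "(\<Sum>a\<in>UNIV. m1 a) = integral\<^sup>L \<mu> (\<lambda>U. \<Sum>a\<in>UNIV. nx a U)"
    unfolding m1_def by simp
  also have "\<dots> = integral\<^sup>L \<mu> (\<lambda>U. 1)"
    by (rule integral_cong_AE[OF meas meas AE_sum_nx]) (intro continuous_intros)+
  also have "\<dots> = 1" using prob_space.prob_space[OF prob] by simp
  finally show ?thesis .
qed

lemma sum_m2: "(\<Sum>b\<in>UNIV. m2 a b) = m1 a"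
proof -
  have "(\<Sum>b\<in>UNIV. m2 a b) = integral\<^sup>L \<mu> (\<lambda>U. \<Sum>b\<in>UNIV. nx a U * nx b U)"
    unfolding m2_def by simp
  also have "\<dots> = integral\<^sup>L \<mu> (\<lambda>U. nx a U)"
    by (rule integral_cong_AE[OF meas meas])
      (auto intro!: continuous_intros eventually_mono[OF AE_sum_nx] simp: sum_distrib_left[symmetric])
  finally show ?thesis by (simp add: m1_def)
qed

lemma sum_m3: "(\<Sum>c\<in>UNIV. m3 a b c) = m2 a b"
proof -
  have "(\<Sum>c\<in>UNIV. m3 a b c) = integral\<^sup>L \<mu> (\<lambda>U. \<Sum>c\<in>UNIV. nx a U * nx b U * nx c U)"
    unfolding m3_def by simp
  also have "\<dots> = integral\<^sup>L \<mu> (\<lambda>U. nx a U * nx b U)"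
    by (rule integral_cong_AE[OF meas meas])
      (auto intro!: continuous_intros eventually_mono[OF AE_sum_nx] simp: sum_distrib_left[symmetric])
  finally show ?thesis by (simp add: m2_def)
qed

lemma inv_phase:
  assumes "cnj w * w = 1" "continuous_on UNIV (g :: complex^'n^'n \<Rightarrow> complex)"
  shows "integral\<^sup>L \<mu> (\<lambda>U. g (diagm (ph p w) ** U)) = integral\<^sup>L \<mu> g"
  by (rule haar_invariant[OF haar diagm_unitary assms(2)]) (simp add: ph_def assms(1))

lemma inv_rot:
  assumes "p \<noteq> q" "continuous_on UNIV (g :: complex^'n^'n \<Rightarrow> complex)"
  shows "integral\<^sup>L \<mu> (\<lambda>U. g (rotm p q ** U)) = integral\<^sup>L \<mu> g"
  by (rule haar_invariant[OF haar rotm_unitary[OF assms(1)] assms(2)])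


definition yy :: "'n \<Rightarrow> 'n \<Rightarrow> nat \<Rightarrow> complex \<Rightarrow> complex^'n^'n \<Rightarrow> complex" where
  "yy p q k w U = ((w * U$p$i + U$q$i) * (cnj w * cnj (U$p$i) + cnj (U$q$i)))^k"

lemma cont_yy[continuous_intros]: "continuous_on S (\<lambda>U. yy p q k w U)"
  unfolding yy_def by (intro continuous_intros)

lemma integ_yy[simp]: "integrable \<mu> (\<lambda>U. yy p q k w U)"
  by (intro integ continuous_intros)

lemma yy_phase:
  assumes "p \<noteq> q" "cnj w * w = 1"
  shows "integral\<^sup>L \<mu> (yy p q k w) = integral\<^sup>L \<mu> (yy p q k 1)"
proof -
  have "integral\<^sup>L \<mu> (\<lambda>U. yy p q k 1 (diagm (ph p w) ** U)) = integral\<^sup>L \<mu> (yy p q k 1)"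
    by (rule inv_phase[OF assms(2)]) (intro continuous_intros)
  moreover have "yy p q k 1 (diagm (ph p w) ** U) = yy p q k w U" for U
    using assms(1) by (simp add: yy_def ph_def)
  ultimately show ?thesis by simp
qed

lemma yy_avg:
  assumes "p \<noteq> q"
  shows "integral\<^sup>L \<mu> (yy p q k 1) * 4 =
    integral\<^sup>L \<mu> (\<lambda>U. yy p q k 1 U + yy p q k \<i> U + yy p q k (-1) U + yy p q k (-\<i>) U)"
proof -
  have "integral\<^sup>L \<mu> (\<lambda>U. yy p q k 1 U + yy p q k \<i> U + yy p q k (-1) U + yy p q k (-\<i>) U)
    = integral\<^sup>L \<mu> (yy p q k 1) + integral\<^sup>L \<mu> (yy p q k \<i>) + integral\<^sup>L \<mu> (yy p q k (-1))
      + integral\<^sup>L \<mu> (yy p q k (-\<i>))"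
    by simp
  also have "\<dots> = integral\<^sup>L \<mu> (yy p q k 1) * 4"
    using yy_phase[OF assms, of \<i> k] yy_phase[OF assms, of "-1" k] yy_phase[OF assms, of "-\<i>" k]
    by simp
  finally show ?thesis by simp
qed

lemma nx_rot: assumes "p \<noteq> q"
  shows "nx p (rotm p q ** U) = ((U$p$i + U$q$i) * (cnj (U$p$i) + cnj (U$q$i))) / 2"
proof -
  have "nx p (rotm p q ** U) = (rs * rs) * ((U$p$i + U$q$i) * (cnj (U$p$i) + cnj (U$q$i)))"
    by (simp add: nx_def rotm_mult_p[OF assms] mult_ac)
  thus ?thesis by (simp add: rs_sq)
qed

lemma rel3: assumes "p \<noteq> q" shows "m3 p p p = 3 * m3 p p q"
proof -
  have "m3 p p p = integral\<^sup>L \<mu> (\<lambda>U. nx p (rotm p q ** U) * nx p (rotm p q ** U) * nx p (rotm p q ** U))"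
    unfolding m3_def by (rule inv_rot[OF assms, symmetric]) (intro continuous_intros)
  also have "\<dots> = integral\<^sup>L \<mu> (\<lambda>U. yy p q 3 1 U / 8)"
    by (simp add: nx_rot[OF assms] yy_def power3_eq_cube)
  also have "\<dots> = integral\<^sup>L \<mu> (yy p q 3 1) / 8" by simp
  finally have e1: "m3 p p p * 32 = integral\<^sup>L \<mu> (yy p q 3 1) * 4" by (simp add: algebra_simps)
  have pt: "yy p q 3 1 U + yy p q 3 \<i> U + yy p q 3 (-1) U + yy p q 3 (-\<i>) U =
     4 * (nx p U * nx p U * nx p U + nx q U * nx q U * nx q U + 9 * (nx p U * nx p U * nx q U)
       + 9 * (nx q U * nx q U * nx p U))" for U
  proof -
    have "yy p q 3 1 U + yy p q 3 \<i> U + yy p q 3 (-1) U + yy p q 3 (-\<i>) U =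
      4*((nx p U + nx q U)^3 + 6*(nx p U)*(nx q U)*(nx p U + nx q U))"
      unfolding yy_def nx_def by (rule avg6)
    also have "\<dots> = 4 * (nx p U * nx p U * nx p U + nx q U * nx q U * nx q U + 9 * (nx p U * nx p U * nx q U)
       + 9 * (nx q U * nx q U * nx p U))"
      by algebra
    finally show ?thesis .
  qed
  have "integral\<^sup>L \<mu> (yy p q 3 1) * 4 = 4 * (m3 p p p + m3 q q q + 9 * m3 p p q + 9 * m3 q q p)"
    unfolding yy_avg[OF assms] pt by (simp add: m3_def)
  moreover have "m3 q q q = m3 p p p" using m3_swap[of p q p p p] by (simp add: sw_def)
  moreover have "m3 q q p = m3 p p q" using m3_swap[of p q p p q] assms by (simp add: sw_def)
  ultimately show ?thesis using e1 by simp
qed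

lemma rel2: assumes "p \<noteq> q" shows "m2 p p = 2 * m2 p q"
proof -
  have "m2 p p = integral\<^sup>L \<mu> (\<lambda>U. nx p (rotm p q ** U) * nx p (rotm p q ** U))"
    unfolding m2_def by (rule inv_rot[OF assms, symmetric]) (intro continuous_intros)
  also have "\<dots> = integral\<^sup>L \<mu> (\<lambda>U. yy p q 2 1 U / 4)"
    by (simp add: nx_rot[OF assms] yy_def power2_eq_square)
  also have "\<dots> = integral\<^sup>L \<mu> (yy p q 2 1) / 4" by simp
  finally have e1: "m2 p p * 16 = integral\<^sup>L \<mu> (yy p q 2 1) * 4" by (simp add: algebra_simps)
  have pt: "yy p q 2 1 U + yy p q 2 \<i> U + yy p q 2 (-1) U + yy p q 2 (-\<i>) U =
     4 * (nx p U * nx p U + nx q U * nx q U + 4 * (nx p U * nx q U))" for U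
  proof -
    have "yy p q 2 1 U + yy p q 2 \<i> U + yy p q 2 (-1) U + yy p q 2 (-\<i>) U =
      4*((nx p U + nx q U)^2 + 2*(nx p U)*(nx q U))"
      unfolding yy_def nx_def by (rule avg4)
    also have "\<dots> = 4 * (nx p U * nx p U + nx q U * nx q U + 4 * (nx p U * nx q U))"
      by algebra
    finally show ?thesis .
  qed
  have "integral\<^sup>L \<mu> (yy p q 2 1) * 4 = 4 * (m2 p p + m2 q q + 4 * m2 p q)"
    unfolding yy_avg[OF assms] pt by (simp add: m2_def)
  moreover have "m2 q q = m2 p p" using m2_swap[of p q p p] by (simp add: sw_def)
  ultimately show ?thesis using e1 by simp
qed



lemma dd_ge: "(of_nat CARD('n)::complex) \<noteq> 0" "(of_nat CARD('n)::complex) + 1 \<noteq> 0" "(of_nat CARD('n)::complex) + 2 \<noteq> 0"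
proof -
  have e1: "(of_nat CARD('n)::complex) + 1 = of_nat (CARD('n) + 1)" by simp
  have e2: "(of_nat CARD('n)::complex) + 2 = of_nat (CARD('n) + 2)" by simp
  have n0: "(of_nat m :: complex) \<noteq> 0" if "m \<noteq> 0" for m
    using that by (simp only: of_nat_eq_0_iff) simp
  show "(of_nat CARD('n)::complex) \<noteq> 0" by (rule n0) simp
  show "(of_nat CARD('n)::complex) + 1 \<noteq> 0" unfolding e1 by (rule n0) simp
  show "(of_nat CARD('n)::complex) + 2 \<noteq> 0" unfolding e2 by (rule n0) simp
qed

lemma sum_split:
  fixes f :: "'n \<Rightarrow> complex"
  assumes "\<And>b. b \<noteq> a \<Longrightarrow> f b = c"
  shows "(\<Sum>b\<in>UNIV. f b) = f a + ((of_nat CARD('n)::complex) - 1) * c"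
proof -
  have "(\<Sum>b\<in>UNIV. f b) = f a + (\<Sum>b\<in>UNIV - {a}. f b)"
    by (rule sum.remove) auto
  also have "(\<Sum>b\<in>UNIV - {a}. f b) = (\<Sum>b\<in>UNIV - {a}. c)"
    by (rule sum.cong) (auto simp: assms)
  also have "\<dots> = of_nat (CARD('n) - 1) * c" by (simp add: card_Diff_singleton)
  also have "of_nat (CARD('n) - 1) = (of_nat CARD('n)::complex) - 1"
    by (simp add: of_nat_diff Suc_le_eq)
  finally show ?thesis .
qed


lemma m1_val: "m1 a = 1 / (of_nat CARD('n)::complex)"
proof -
  have "(\<Sum>b\<in>UNIV. m1 b) = m1 a + ((of_nat CARD('n)::complex) - 1) * m1 a"
    by (rule sum_split) (metis m1_swap sw_def)
  with sum_m1 have "(of_nat CARD('n)::complex) * m1 a = 1" by (simp add: algebra_simps)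
  thus ?thesis using dd_ge by (simp add: field_simps)
qed

lemma m2_diag: "m2 a a = 2 / ((of_nat CARD('n)::complex) * ((of_nat CARD('n)::complex) + 1))"
proof -
  have "(\<Sum>b\<in>UNIV. m2 a b) = m2 a a + ((of_nat CARD('n)::complex) - 1) * (m2 a a / 2)"
    by (rule sum_split) (metis rel2 nonzero_mult_div_cancel_left zero_neq_numeral)
  hence "m2 a a + ((of_nat CARD('n)::complex) - 1) * (m2 a a / 2) = 1 / (of_nat CARD('n)::complex)" using sum_m2 m1_val by simp
  thus ?thesis using dd_ge by (intro ar_m2)
qed

lemma m2_off: assumes "a \<noteq> b" shows "m2 a b = 1 / ((of_nat CARD('n)::complex) * ((of_nat CARD('n)::complex) + 1))"
proof -
  show ?thesis using rel2[OF assms] m2_diag[of a] by (intro ar_half) simp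
qed


lemma m3_diag: "m3 a a a = 6 * KK (of_nat CARD('n)::complex)"
proof -
  have "(\<Sum>b\<in>UNIV. m3 a a b) = m3 a a a + ((of_nat CARD('n)::complex) - 1) * (m3 a a a / 3)"
    by (rule sum_split) (metis rel3 nonzero_mult_div_cancel_left zero_neq_numeral)
  hence "m3 a a a + ((of_nat CARD('n)::complex) - 1) * (m3 a a a / 3) = 2 / ((of_nat CARD('n)::complex) * ((of_nat CARD('n)::complex) + 1))" using sum_m3 m2_diag by simp
  thus ?thesis using dd_ge by (intro ar_m3)
qed

lemma m3_two: assumes "a \<noteq> b" shows "m3 a a b = 2 * KK (of_nat CARD('n)::complex)"
proof -
  have "3 * m3 a a b = 3 * (2 * KK (of_nat CARD('n)::complex))"
    using rel3[OF assms] m3_diag[of a] by simp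
  thus ?thesis by simp
qed

lemma m3_comm: "m3 a b c = m3 b a c" "m3 a b c = m3 a c b"
  by (simp_all add: m3_def mult_ac)

lemma m3_distinct:
  assumes "a \<noteq> b" "b \<noteq> c" "a \<noteq> c"
  shows "m3 a b c = KK (of_nat CARD('n)::complex)"
proof -
  have "(\<Sum>e\<in>UNIV. m3 a b e) = m3 a b a + m3 a b b + (\<Sum>e\<in>UNIV - {a} - {b}. m3 a b e)"
  proof -
    have "(\<Sum>e\<in>UNIV. m3 a b e) = m3 a b a + (\<Sum>e\<in>UNIV - {a}. m3 a b e)"
      by (rule sum.remove) auto
    also have "(\<Sum>e\<in>UNIV - {a}. m3 a b e) = m3 a b b + (\<Sum>e\<in>UNIV - {a} - {b}. m3 a b e)"
      by (rule sum.remove) (use assms in auto)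
    finally show ?thesis by simp
  qed
  also have "(\<Sum>e\<in>UNIV - {a} - {b}. m3 a b e) = (\<Sum>e\<in>UNIV - {a} - {b}. m3 a b c)"
  proof (rule sum.cong)
    fix e assume "e \<in> UNIV - {a} - {b}"
    then show "m3 a b e = m3 a b c"
      using m3_swap[of e c a b e] assms by (simp add: sw_def split: if_splits)
  qed simp
  also have "\<dots> = of_nat (CARD('n) - 2) * m3 a b c"
    using assms by (simp add: card_Diff_singleton numeral_2_eq_2)
  also have "of_nat (CARD('n) - 2) = (of_nat CARD('n)::complex) - 2"
  proof -
    have "{a, b, c} \<subseteq> UNIV" by simp
    have "card {a,b,c} \<le> CARD('n)" by (rule card_mono) simp_all
    hence "2 \<le> CARD('n)" using assms by simp
    thus ?thesis by (simp add: of_nat_diff)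
  qed
  finally have S: "m2 a b = m3 a b a + m3 a b b + ((of_nat CARD('n)::complex) - 2) * m3 a b c" using sum_m3 by simp
  have A: "m3 a b a = 2 * KK (of_nat CARD('n)::complex)" using m3_two[of a b] assms m3_comm by metis
  have B: "m3 a b b = 2 * KK (of_nat CARD('n)::complex)" using m3_two[of b a] assms m3_comm by metis
  have M: "m2 a b = ((of_nat CARD('n)::complex) + 2) * KK (of_nat CARD('n)::complex)"
    using m2_off[OF assms(1)] dd_ge by (simp add: KK_def)
  have "((of_nat CARD('n)::complex) - 2) * m3 a b c = ((of_nat CARD('n)::complex) + 2) * KK (of_nat CARD('n)::complex) - 4 * KK (of_nat CARD('n)::complex)"
    using S A B M by (simp add: algebra_simps)
  also have "\<dots> = ((of_nat CARD('n)::complex) - 2) * KK (of_nat CARD('n)::complex)" by (simp add: algebra_simps)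
  finally have E: "((of_nat CARD('n)::complex) - 2) * m3 a b c = ((of_nat CARD('n)::complex) - 2) * KK (of_nat CARD('n)::complex)" .
  have "(of_nat CARD('n)::complex) - 2 \<noteq> 0"
  proof -
    have "{a, b, c} \<subseteq> UNIV" by simp
    have "card {a,b,c} \<le> CARD('n)" by (rule card_mono) simp_all
    hence "CARD('n) \<noteq> 2" using assms by simp
    hence "(of_nat CARD('n)::complex) \<noteq> of_nat 2" by (simp only: of_nat_eq_iff) simp
    thus ?thesis by simp
  qed
  with E show ?thesis by simp
qed


lemma m3_val: "m3 a b c = KK (of_nat CARD('n)::complex) * (if a = b \<and> b = c then 6 else if a = b \<or> b = c \<or> a = c then 2 else 1)"
proof -
  have "a = b \<and> b = c \<or> (a = b \<and> b \<noteq> c) \<or> (a = c \<and> a \<noteq> b) \<or> (b = c \<and> a \<noteq> b) \<or> (a \<noteq> b \<and> b \<noteq> c \<and> a \<noteq> c)"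
    by blast
  thus ?thesis
  proof (elim disjE conjE)
    assume "a = b" "b = c" thus ?thesis using m3_diag[of a] by simp
  next
    assume "a = b" "b \<noteq> c" thus ?thesis using m3_two[of a c] by simp
  next
    assume "a = c" "a \<noteq> b" thus ?thesis using m3_two[of a b] m3_comm[of a b a] by simp
  next
    assume "b = c" "a \<noteq> b" thus ?thesis using m3_two[of b a] m3_comm[of a b b] m3_comm[of b a b] by simp
  next
    assume "a \<noteq> b" "b \<noteq> c" "a \<noteq> c" thus ?thesis using m3_distinct[of a b c] by simp
  qed
qed

lemma m2_val: "m2 a b = (if a = b then 2 else 1) / ((of_nat CARD('n)::complex) * ((of_nat CARD('n)::complex) + 1))"
  using m2_diag[of a] m2_off[of a b] by auto

definition mono3 where
  "mono3 a b c a' b' c' U = U$a$i * U$b$i * U$c$i * (cnj (U$a'$i) * cnj (U$b'$i) * cnj (U$c'$i))"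

definition mono2 where
  "mono2 a b a' b' U = U$a$i * U$b$i * (cnj (U$a'$i) * cnj (U$b'$i))"

lemma cont_mono3[continuous_intros]: "continuous_on S (mono3 a b c a' b' c')"
  unfolding mono3_def by (intro continuous_intros)
lemma cont_mono2[continuous_intros]: "continuous_on S (mono2 a b a' b')"
  unfolding mono2_def by (intro continuous_intros)
lemma integ_mono3[simp]: "integrable \<mu> (mono3 a b c a' b' c')"
  by (intro integ continuous_intros)
lemma integ_mono2[simp]: "integrable \<mu> (mono2 a b a' b')"
  by (intro integ continuous_intros)

lemma E3_zero:
  assumes "cnt3 t a b c \<noteq> cnt3 t a' b' c'"
  shows "integral\<^sup>L \<mu> (mono3 a b c a' b' c') = 0"
proof (rule phase_ne[OF cnt3_le cnt3_le assms])
  have "integral\<^sup>L \<mu> (mono3 a b c a' b' c') =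
      integral\<^sup>L \<mu> (\<lambda>U. mono3 a b c a' b' c' (diagm (ph t \<i>) ** U))"
    by (rule inv_phase[symmetric]) (simp_all add: continuous_intros)
  also have "\<dots> = integral\<^sup>L \<mu> (\<lambda>U. (\<i> ^ cnt3 t a b c * (-\<i>) ^ cnt3 t a' b' c') * mono3 a b c a' b' c' U)"
  proof -
    have "mono3 a b c a' b' c' (diagm (ph t \<i>) ** U) =
      ((ph t \<i> a * ph t \<i> b * ph t \<i> c) * (cnj (ph t \<i> a') * cnj (ph t \<i> b') * cnj (ph t \<i> c')))
       * mono3 a b c a' b' c' U" for U
      by (simp add: mono3_def mult_ac)
    thus ?thesis by (simp only: phase_prod phase_prod_cnj)
  qed
  also have "\<dots> = (\<i> ^ cnt3 t a b c * (-\<i>) ^ cnt3 t a' b' c') * integral\<^sup>L \<mu> (mono3 a b c a' b' c')"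
    by simp
  finally show "integral\<^sup>L \<mu> (mono3 a b c a' b' c') =
     \<i> ^ cnt3 t a b c * (-\<i>) ^ cnt3 t a' b' c' * integral\<^sup>L \<mu> (mono3 a b c a' b' c')" .
qed

lemma E2_zero:
  assumes "cnt2 t a b \<noteq> cnt2 t a' b'"
  shows "integral\<^sup>L \<mu> (mono2 a b a' b') = 0"
proof (rule phase_ne[OF cnt2_le cnt2_le assms])
  have "integral\<^sup>L \<mu> (mono2 a b a' b') =
      integral\<^sup>L \<mu> (\<lambda>U. mono2 a b a' b' (diagm (ph t \<i>) ** U))"
    by (rule inv_phase[symmetric]) (simp_all add: continuous_intros)
  also have "\<dots> = integral\<^sup>L \<mu> (\<lambda>U. (\<i> ^ cnt2 t a b * (-\<i>) ^ cnt2 t a' b') * mono2 a b a' b' U)"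
  proof -
    have "mono2 a b a' b' (diagm (ph t \<i>) ** U) =
      ((ph t \<i> a * ph t \<i> b) * (cnj (ph t \<i> a') * cnj (ph t \<i> b'))) * mono2 a b a' b' U" for U
      by (simp add: mono2_def mult_ac)
    thus ?thesis by (simp only: phase_prod2 phase_prod2_cnj)
  qed
  also have "\<dots> = (\<i> ^ cnt2 t a b * (-\<i>) ^ cnt2 t a' b') * integral\<^sup>L \<mu> (mono2 a b a' b')"
    by simp
  finally show "integral\<^sup>L \<mu> (mono2 a b a' b') =
     \<i> ^ cnt2 t a b * (-\<i>) ^ cnt2 t a' b' * integral\<^sup>L \<mu> (mono2 a b a' b')" .
qed

lemma E3: "integral\<^sup>L \<mu> (mono3 a b c a' b' c') = KK (of_nat CARD('n)::complex) * R3 a b c a' b' c'"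
proof (cases "(a'=a \<and> b'=b \<and> c'=c) \<or> (a'=a \<and> b'=c \<and> c'=b) \<or> (a'=b \<and> b'=a \<and> c'=c) \<or>
         (a'=b \<and> b'=c \<and> c'=a) \<or> (a'=c \<and> b'=a \<and> c'=b) \<or> (a'=c \<and> b'=b \<and> c'=a)")
  case True
  have v: "m3 a b c = KK (of_nat CARD('n)::complex) * R3 a b c a b c" by (simp only: m3_val R3_id)
  from True show ?thesis
  proof (elim disjE conjE)
    assume "a' = a" "b' = b" "c' = c"
    moreover have "integral\<^sup>L \<mu> (mono3 a b c a b c) = m3 a b c"
      unfolding m3_def mono3_def nx_def by (simp add: mult_ac)
    ultimately show ?thesis using v by simp
  next
    assume "a' = a" "b' = c" "c' = b"
    moreover have "integral\<^sup>L \<mu> (mono3 a b c a c b) = m3 a b c"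
      unfolding m3_def mono3_def nx_def by (simp add: mult_ac)
    ultimately show ?thesis using v R3_p2[of a b c] by simp
  next
    assume "a' = b" "b' = a" "c' = c"
    moreover have "integral\<^sup>L \<mu> (mono3 a b c b a c) = m3 a b c"
      unfolding m3_def mono3_def nx_def by (simp add: mult_ac)
    ultimately show ?thesis using v R3_p3[of a b c] by simp
  next
    assume "a' = b" "b' = c" "c' = a"
    moreover have "integral\<^sup>L \<mu> (mono3 a b c b c a) = m3 a b c"
      unfolding m3_def mono3_def nx_def by (simp add: mult_ac)
    ultimately show ?thesis using v R3_p4[of a b c] by simp
  next
    assume "a' = c" "b' = a" "c' = b"
    moreover have "integral\<^sup>L \<mu> (mono3 a b c c a b) = m3 a b c"
      unfolding m3_def mono3_def nx_def by (simp add: mult_ac)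
    ultimately show ?thesis using v R3_p5[of a b c] by simp
  next
    assume "a' = c" "b' = b" "c' = a"
    moreover have "integral\<^sup>L \<mu> (mono3 a b c c b a) = m3 a b c"
      unfolding m3_def mono3_def nx_def by (simp add: mult_ac)
    ultimately show ?thesis using v R3_p6[of a b c] by simp
  qed
next
  case False
  have "\<not> (\<forall>t\<in>{a,b,c,a',b',c'}. cnt3 t a b c = cnt3 t a' b' c')"
  proof
    assume "\<forall>t\<in>{a,b,c,a',b',c'}. cnt3 t a b c = cnt3 t a' b' c'"
    from False match3[OF this] show False by (rule notE)
  qed
  then obtain t where "cnt3 t a b c \<noteq> cnt3 t a' b' c'" by blast
  hence z: "integral\<^sup>L \<mu> (mono3 a b c a' b' c') = 0" by (rule E3_zero)
  show ?thesis using z R3_zero[OF False] by simp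
qed

lemma E2: "integral\<^sup>L \<mu> (mono2 a b a' b') = R2 a b a' b' / ((of_nat CARD('n)::complex) * ((of_nat CARD('n)::complex) + 1))"
proof (cases "(a'=a \<and> b'=b) \<or> (a'=b \<and> b'=a)")
  case True
  from True show ?thesis
  proof (elim disjE conjE)
    assume "a' = a" "b' = b"
    moreover have "integral\<^sup>L \<mu> (mono2 a b a b) = m2 a b"
      unfolding m2_def mono2_def nx_def by (simp add: mult_ac)
    ultimately show ?thesis using m2_val[of a b] R2_id[of a b] by simp
  next
    assume "a' = b" "b' = a"
    moreover have "integral\<^sup>L \<mu> (mono2 a b b a) = m2 a b"
      unfolding m2_def mono2_def nx_def by (simp add: mult_ac)
    ultimately show ?thesis using m2_val[of a b] R2_sw[of a b] by simp
  qed
next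
  case False
  have "\<not> (\<forall>t\<in>{a,b,a',b'}. cnt2 t a b = cnt2 t a' b')"
  proof
    assume "\<forall>t\<in>{a,b,a',b'}. cnt2 t a b = cnt2 t a' b'"
    from False match2[OF this] show False by (rule notE)
  qed
  then obtain t where "cnt2 t a b \<noteq> cnt2 t a' b'" by blast
  hence z: "integral\<^sup>L \<mu> (mono2 a b a' b') = 0" by (rule E2_zero)
  show ?thesis using z R2_zero[OF False] by simp
qed


lemma qf2_expand: "qfc i \<rho> U ^ 2 = (\<Sum>a\<in>UNIV. \<Sum>b\<in>UNIV. \<Sum>c\<in>UNIV. \<Sum>e\<in>UNIV.
     \<rho>$a$b * \<rho>$c$e * mono2 b e a c U)"
  unfolding power2_eq_square qfc_def
  apply (simp only: sum_distrib_right)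
  apply (simp only: sum_distrib_left)
  apply (simp add: mono2_def mult_ac)
  done

lemma qf3_expand: "qfc i \<rho> U ^ 3 = (\<Sum>a\<in>UNIV. \<Sum>b\<in>UNIV. \<Sum>c\<in>UNIV. \<Sum>e\<in>UNIV. \<Sum>h\<in>UNIV. \<Sum>g\<in>UNIV.
     \<rho>$a$b * \<rho>$c$e * \<rho>$h$g * mono3 b e g a c h U)"
  unfolding power3_eq_cube qfc_def
  apply (simp only: mult.assoc)
  apply (simp only: sum_distrib_right)
  apply (simp only: sum_distrib_left)
  apply (simp add: mono3_def mult_ac)
  done

lemma E_qf2: "integral\<^sup>L \<mu> (\<lambda>U. qfc i \<rho> U ^ 2) =
   (trace \<rho> ^ 2 + trace (\<rho> ** \<rho>)) / ((of_nat CARD('n)::complex) * ((of_nat CARD('n)::complex) + 1))"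
proof -
  have "integral\<^sup>L \<mu> (\<lambda>U. qfc i \<rho> U ^ 2) = (\<Sum>a\<in>UNIV. \<Sum>b\<in>UNIV. \<Sum>c\<in>UNIV. \<Sum>e\<in>UNIV.
     \<rho>$a$b * \<rho>$c$e * integral\<^sup>L \<mu> (mono2 b e a c))"
    unfolding qf2_expand by simp
  also have "\<dots> = (\<Sum>a\<in>UNIV. \<Sum>b\<in>UNIV. \<Sum>c\<in>UNIV. \<Sum>e\<in>UNIV.
     \<rho>$a$b * \<rho>$c$e * R2 b e a c) / ((of_nat CARD('n)::complex) * ((of_nat CARD('n)::complex) + 1))"
    by (simp add: E2 sum_divide_distrib)
  also have "\<dots> = (trace \<rho> ^ 2 + trace (\<rho> ** \<rho>)) / ((of_nat CARD('n)::complex) * ((of_nat CARD('n)::complex) + 1))"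
    by (simp only: sum4_R2 trace_def2[of \<rho>] trace_sq)
  finally show ?thesis .
qed

lemma E_qf3: "integral\<^sup>L \<mu> (\<lambda>U. qfc i \<rho> U ^ 3) =
   KK (of_nat CARD('n)::complex) * (trace \<rho> ^ 3 + 3 * trace \<rho> * trace (\<rho> ** \<rho>) + 2 * trace (\<rho> ** \<rho> ** \<rho>))"
proof -
  have "integral\<^sup>L \<mu> (\<lambda>U. qfc i \<rho> U ^ 3) = (\<Sum>a\<in>UNIV. \<Sum>b\<in>UNIV. \<Sum>c\<in>UNIV. \<Sum>e\<in>UNIV. \<Sum>h\<in>UNIV. \<Sum>g\<in>UNIV.
     \<rho>$a$b * \<rho>$c$e * \<rho>$h$g * integral\<^sup>L \<mu> (mono3 b e g a c h))"
    unfolding qf3_expand by simp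
  also have "\<dots> = KK (of_nat CARD('n)::complex) * (\<Sum>a\<in>UNIV. \<Sum>b\<in>UNIV. \<Sum>c\<in>UNIV. \<Sum>e\<in>UNIV. \<Sum>h\<in>UNIV. \<Sum>g\<in>UNIV.
     \<rho>$a$b * \<rho>$c$e * \<rho>$h$g * R3 b e g a c h)"
    by (simp add: E3 sum_distrib_left mult_ac)
  also have "\<dots> = KK (of_nat CARD('n)::complex) * (trace \<rho> ^ 3 + 3 * trace \<rho> * trace (\<rho> ** \<rho>) + 2 * trace (\<rho> ** \<rho> ** \<rho>))"
    by (simp only: sum6_R3 trace_def2[of \<rho>] trace_sq trace_cube)
  finally show ?thesis .
qed

end


lemma cadj_tensor3: "cadj (tensor3 U) = tensor3 (cadj U)"
  by (simp add: cadj_def tensor3_def vec_eq_iff)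

lemma tensor3_mult:
  fixes A B :: "complex^'n::finite^'n"
  shows "tensor3 A ** tensor3 B = tensor3 (A ** B)"
proof -
  have "(tensor3 A ** tensor3 B) $ x $ z = tensor3 (A ** B) $ x $ z" for x z :: "'n::finite \<times> 'n \<times> 'n"
  proof -
    obtain x1 x2 x3 where x: "x = (x1, x2, x3)" by (cases x) auto
    obtain z1 z2 z3 where z: "z = (z1, z2, z3)" by (cases z) auto
    show ?thesis
      unfolding x z tensor3_def matrix_matrix_mult_def
      apply (simp only: vec_lambda_beta sum_triple fst_conv snd_conv mult.assoc)
      apply (simp only: sum_distrib_right)
      apply (simp only: sum_distrib_left)
      apply (simp add: mult_ac)
      done
  qed
  thus ?thesis by (simp add: vec_eq_iff)
qed

definition ov :: "'n::finite \<times> 'n \<times> 'n \<Rightarrow> complex" where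
  "ov x = 1 + (- of_nat CARD('n)) ^ (wt x - 1)"

lemma Osq: "(O_plus ** O_plus :: complex^('n::finite \<times> 'n \<times> 'n)^('n \<times> 'n \<times> 'n)) =
   (\<chi> x z. if x = z then ov x * ov x else 0)"
  by (simp add: vec_eq_iff O_plus_def matrix_matrix_mult_def ov_def cong: if_cong)

lemma trace_diag: "trace ((\<chi> x z. if x = z then g x else 0) ** (Y::complex^'m^'m)) = (\<Sum>x\<in>UNIV. g x * Y$x$x)"
  by (simp add: trace_def matrix_matrix_mult_def cong: if_cong)

lemma ov_sq:
  fixes a b c :: "'n::finite"
  shows "ov (a, b, c) * ov (a, b, c) =
   4 + ((of_nat CARD('n)::complex)^2 - 2 * (of_nat CARD('n)::complex) - 3) * ((if a = b then 1 else 0) + (if b = c then 1 else 0) + (if a = c then 1 else 0))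
   + ((of_nat CARD('n)::complex)^4 - (of_nat CARD('n)::complex)^2 + 6 * (of_nat CARD('n)::complex) + 6) * (if a = b \<and> b = c then 1 else 0)"
  by (cases "a = b"; cases "b = c"; cases "a = c") (simp_all add: ov_def wt_def algebra_simps power2_eq_square power4_eq_xxxx)

lemma unitary_right: "unitary_mat U \<Longrightarrow> U ** cadj U = mat 1"
  unfolding unitary_mat_def using matrix_left_right_inverse by blast

lemma trace_conj: "unitary_mat U \<Longrightarrow> trace (cadj U ** \<rho> ** U) = trace \<rho>"
proof -
  assume u: "unitary_mat U"
  have "trace (cadj U ** \<rho> ** U) = trace (U ** (cadj U ** \<rho>))" by (rule trace_mul_sym)
  also have "\<dots> = trace \<rho>" by (simp add: matrix_mul_assoc unitary_right[OF u])
  finally show ?thesis .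
qed

lemma conj_diag: "(cadj U ** \<rho> ** U) $ i $ i = qfc i \<rho> U"
  unfolding qfc_def cadj_def matrix_matrix_mult_def
  apply (simp add: sum_distrib_right)
  apply (subst sum.swap)
  apply (simp add: mult_ac)
  done

lemma pointwise:
  fixes U \<rho> :: "complex^'n::finite^'n"
  assumes u: "unitary_mat U" and tr: "trace \<rho> = 1"
  shows "trace (tensor3 U ** (O_plus ** O_plus) ** cadj (tensor3 U) ** tensor3 \<rho>) =
    4 + 3 * ((of_nat CARD('n)::complex)^2 - 2 * (of_nat CARD('n)::complex) - 3) * (\<Sum>i\<in>UNIV. qfc i \<rho> U ^ 2)
      + ((of_nat CARD('n)::complex)^4 - (of_nat CARD('n)::complex)^2 + 6 * (of_nat CARD('n)::complex) + 6) * (\<Sum>i\<in>UNIV. qfc i \<rho> U ^ 3)"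
proof -
  let ?T = "tensor3 U" and ?X = "O_plus ** O_plus :: complex^('n \<times> 'n \<times> 'n)^('n \<times> 'n \<times> 'n)"
  let ?\<sigma> = "cadj U ** \<rho> ** U"
  have eqT: "(cadj ?T ** tensor3 \<rho>) ** ?T = tensor3 ?\<sigma>"
    by (simp only: cadj_tensor3 tensor3_mult)
  have "trace (?T ** ?X ** cadj ?T ** tensor3 \<rho>) = trace (?T ** (?X ** (cadj ?T ** tensor3 \<rho>)))"
    by (simp add: matrix_mul_assoc)
  also have "\<dots> = trace ((?X ** (cadj ?T ** tensor3 \<rho>)) ** ?T)" by (rule trace_mul_sym)
  also have "\<dots> = trace (?X ** tensor3 ?\<sigma>)"
    by (simp only: matrix_mul_assoc[of ?X "cadj ?T ** tensor3 \<rho>" ?T, symmetric] eqT)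
  also have "\<dots> = (\<Sum>a\<in>UNIV. \<Sum>b\<in>UNIV. \<Sum>c\<in>UNIV. ov (a,b,c) * ov (a,b,c) * (?\<sigma>$a$a * ?\<sigma>$b$b * ?\<sigma>$c$c))"
    unfolding Osq trace_diag sum_triple by (simp add: tensor3_def mult.assoc)
  also have "\<dots> = 4 + 3 * ((of_nat CARD('n)::complex)^2 - 2 * (of_nat CARD('n)::complex) - 3) * (\<Sum>a\<in>UNIV. ?\<sigma>$a$a * ?\<sigma>$a$a)
      + ((of_nat CARD('n)::complex)^4 - (of_nat CARD('n)::complex)^2 + 6 * (of_nat CARD('n)::complex) + 6) * (\<Sum>a\<in>UNIV. ?\<sigma>$a$a * ?\<sigma>$a$a * ?\<sigma>$a$a)"
    unfolding ov_sq
  proof (rule wsum)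
    show "(\<Sum>c\<in>UNIV. ?\<sigma>$c$c) = 1" using trace_conj[OF u, of \<rho>] tr by (simp add: trace_def)
  qed
  also have "\<dots> = 4 + 3 * ((of_nat CARD('n)::complex)^2 - 2 * (of_nat CARD('n)::complex) - 3) * (\<Sum>i\<in>UNIV. qfc i \<rho> U ^ 2)
      + ((of_nat CARD('n)::complex)^4 - (of_nat CARD('n)::complex)^2 + 6 * (of_nat CARD('n)::complex) + 6) * (\<Sum>i\<in>UNIV. qfc i \<rho> U ^ 3)"
    by (simp add: conj_diag power2_eq_square power3_eq_cube)
  finally show ?thesis .
qed

lemma ar_final:
  fixes d t2 t3 :: complex
  assumes "d \<noteq> 0" "d + 1 \<noteq> 0" "d + 2 \<noteq> 0"
  shows "4 + 3 * (d^2 - 2 * d - 3) * (d * ((1 + t2) / (d * (d + 1))))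
      + (d^4 - d^2 + 6 * d + 6) * (d * (KK d * (1 + 3 * t2 + 2 * t3)))
    = 1 / (d + 2) * ((d - 1) * (d^2 + 3 * d + 4) + 3 * d * (d - 1) * (d + 1) * t2
        + 2 * (d^3 - d^2 + 6) * t3)"
proof -
  have e1: "d^2 - 2 * d - 3 = (d - 3) * (d + 1)" by algebra
  have e2: "d^4 - d^2 + 6 * d + 6 = (d + 1) * (d^3 - d^2 + 6)" by algebra
  have h2: "3 * ((d - 3) * (d + 1)) * (d * ((1 + t2) / (d * (d + 1)))) = 3 * (d - 3) * (1 + t2)"
  proof -
    have a: "d * ((1 + t2) / (d * (d + 1))) = (1 + t2) / (d + 1)" using assms(1) by simp
    have b: "(d + 1) * ((1 + t2) / (d + 1)) = 1 + t2" using assms(2) by simp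
    show ?thesis unfolding a using b by (metis mult.assoc mult.commute)
  qed
  have h3: "((d + 1) * (d^3 - d^2 + 6)) * (d * (KK d * (1 + 3 * t2 + 2 * t3)))
       = (d^3 - d^2 + 6) * (1 + 3 * t2 + 2 * t3) / (d + 2)"
  proof -
    let ?Y = "1 + 3 * t2 + 2 * t3"
    have k: "KK d * ?Y = ?Y / (d * ((d + 1) * (d + 2)))" by (simp add: KK_def mult.assoc)
    have a: "d * (?Y / (d * ((d + 1) * (d + 2)))) = ?Y / ((d + 1) * (d + 2))" using assms(1) by simp
    have b: "(d + 1) * (?Y / ((d + 1) * (d + 2))) = ?Y / (d + 2)" using assms(2) by simp
    have "((d + 1) * (d^3 - d^2 + 6)) * (d * (KK d * ?Y)) = (d^3 - d^2 + 6) * ((d + 1) * (?Y / ((d + 1) * (d + 2))))"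
      unfolding k a by (simp only: mult_ac)
    also have "\<dots> = (d^3 - d^2 + 6) * ?Y / (d + 2)" unfolding b by simp
    finally show ?thesis .
  qed
  have h4: "4 + 3 * (d - 3) * (1 + t2) + (d^3 - d^2 + 6) * (1 + 3 * t2 + 2 * t3) / (d + 2)
    = 1 / (d + 2) * ((d - 1) * (d^2 + 3 * d + 4) + 3 * d * (d - 1) * (d + 1) * t2
        + 2 * (d^3 - d^2 + 6) * t3)"
  proof -
    have "4 + 3 * (d - 3) * (1 + t2) = (4 + 3 * (d - 3) * (1 + t2)) * (d + 2) / (d + 2)"
      using assms(3) by simp
    hence "4 + 3 * (d - 3) * (1 + t2) + (d^3 - d^2 + 6) * (1 + 3 * t2 + 2 * t3) / (d + 2)
       = ((4 + 3 * (d - 3) * (1 + t2)) * (d + 2) + (d^3 - d^2 + 6) * (1 + 3 * t2 + 2 * t3)) / (d + 2)"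
      by (simp add: add_divide_distrib)
    also have "(4 + 3 * (d - 3) * (1 + t2)) * (d + 2) + (d^3 - d^2 + 6) * (1 + 3 * t2 + 2 * t3)
       = (d - 1) * (d^2 + 3 * d + 4) + 3 * d * (d - 1) * (d + 1) * t2 + 2 * (d^3 - d^2 + 6) * t3"
      by algebra
    finally show ?thesis by simp
  qed
  show ?thesis unfolding e1 e2 h2 h3 h4 ..
qed

lemma dd_ge_glob: "(of_nat CARD('n::finite)::complex) \<noteq> 0 \<and> (of_nat CARD('n)::complex) + 1 \<noteq> 0 \<and> (of_nat CARD('n)::complex) + 2 \<noteq> 0"
proof -
  have e1: "(of_nat CARD('n)::complex) + 1 = of_nat (CARD('n) + 1)" by simp
  have e2: "(of_nat CARD('n)::complex) + 2 = of_nat (CARD('n) + 2)" by simp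
  have n0: "(of_nat m :: complex) \<noteq> 0" if "m \<noteq> 0" for m
    using that by (simp only: of_nat_eq_0_iff) simp
  show ?thesis unfolding e1 e2 by (intro conjI n0) simp_all
qed

lemma cont_G: "continuous_on UNIV (\<lambda>U::complex^'n::finite^'n. tensor3 U ** X ** cadj (tensor3 U))"
  unfolding tensor3_def cadj_def matrix_matrix_mult_def by (intro continuous_intros)

lemma trace_integral:
  fixes \<mu> :: "(complex^'n::finite^'n) measure"
  assumes haar: "haar_unitary \<mu>"
  shows "trace (Phi3 \<mu> X ** R) = integral\<^sup>L \<mu> (\<lambda>U. trace (tensor3 U ** X ** cadj (tensor3 U) ** R))"
proof -
  let ?G = "\<lambda>U::complex^'n^'n. tensor3 U ** X ** cadj (tensor3 U)"
  have int: "integrable \<mu> ?G" by (rule haar_integrable[OF haar cont_G])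
  have ent: "(Phi3 \<mu> X)$a$b = integral\<^sup>L \<mu> (\<lambda>U. ?G U $a$b)" for a b
    unfolding Phi3_def
    by (rule integral_bounded_linear[OF bounded_linear_compose[OF bounded_linear_vec_nth bounded_linear_vec_nth] int, symmetric])
  have intab: "integrable \<mu> (\<lambda>U. ?G U $a$b * R$b$a)" for a b
    by (rule haar_integrable[OF haar]) (intro continuous_intros cont_G)
  have "trace (Phi3 \<mu> X ** R) = (\<Sum>a\<in>UNIV. \<Sum>b\<in>UNIV. (Phi3 \<mu> X)$a$b * R$b$a)"
    by (simp add: trace_def matrix_matrix_mult_def)
  also have "\<dots> = (\<Sum>a\<in>UNIV. \<Sum>b\<in>UNIV. integral\<^sup>L \<mu> (\<lambda>U. ?G U $a$b * R$b$a))"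
    by (simp add: ent)
  also have "\<dots> = integral\<^sup>L \<mu> (\<lambda>U. \<Sum>a\<in>UNIV. \<Sum>b\<in>UNIV. ?G U $a$b * R$b$a)"
    by (simp add: intab)
  also have "\<dots> = integral\<^sup>L \<mu> (\<lambda>U. trace (?G U ** R))"
    by (simp add: trace_def matrix_matrix_mult_def)
  finally show ?thesis .
qed

lemma Eq2:
  fixes \<mu> :: "(complex^'n::finite^'n) measure"
  assumes "haar_unitary \<mu>"
  shows "integral\<^sup>L \<mu> (\<lambda>U. qfc i \<rho> U ^ 2) = (trace \<rho> ^ 2 + trace (\<rho> ** \<rho>)) / ((of_nat CARD('n)::complex) * ((of_nat CARD('n)::complex) + 1))"
proof -
  interpret haarcol \<mu> i by unfold_locales (rule assms)
  show ?thesis by (rule E_qf2)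
qed

lemma Eq3:
  fixes \<mu> :: "(complex^'n::finite^'n) measure"
  assumes "haar_unitary \<mu>"
  shows "integral\<^sup>L \<mu> (\<lambda>U. qfc i \<rho> U ^ 3) =
    KK (of_nat CARD('n)::complex) * (trace \<rho> ^ 3 + 3 * trace \<rho> * trace (\<rho> ** \<rho>) + 2 * trace (\<rho> ** \<rho> ** \<rho>))"
proof -
  interpret haarcol \<mu> i by unfold_locales (rule assms)
  show ?thesis by (rule E_qf3)
qed

lemma cont_qfc[continuous_intros]: "continuous_on S (\<lambda>U. qfc i \<rho> U)"
  unfolding qfc_def by (intro continuous_intros)

lemma main_haar:
  fixes \<mu> :: "(complex^'n::finite^'n) measure" and \<rho> :: "complex^'n^'n"
  assumes haar: "haar_unitary \<mu>" and tr: "trace \<rho> = 1"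
  shows "trace (Phi3 \<mu> (O_plus ** O_plus) ** tensor3 \<rho>) =
     1 / ((of_nat CARD('n)::complex) + 2) * (((of_nat CARD('n)::complex) - 1) * ((of_nat CARD('n)::complex)^2 + 3 * (of_nat CARD('n)::complex) + 4)
        + 3 * (of_nat CARD('n)::complex) * ((of_nat CARD('n)::complex) - 1) * ((of_nat CARD('n)::complex) + 1) * trace (\<rho> ** \<rho>)
        + 2 * ((of_nat CARD('n)::complex)^3 - (of_nat CARD('n)::complex)^2 + 6) * trace (\<rho> ** \<rho> ** \<rho>))"
proof -
  let ?A = "3 * ((of_nat CARD('n)::complex)^2 - 2 * (of_nat CARD('n)::complex) - 3)" and ?B = "(of_nat CARD('n)::complex)^4 - (of_nat CARD('n)::complex)^2 + 6 * (of_nat CARD('n)::complex) + 6"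
  let ?t2 = "trace (\<rho> ** \<rho>)" and ?t3 = "trace (\<rho> ** \<rho> ** \<rho>)"
  have ps: "prob_space \<mu>" and s: "sets \<mu> = sets borel" using haar by (auto simp: haar_unitary_def)
  have meas: "g \<in> borel_measurable \<mu>" if "continuous_on UNIV g" for g :: "complex^'n^'n \<Rightarrow> complex"
    by (subst measurable_cong_sets[OF s refl]) (rule borel_measurable_continuous_onI[OF that])
  have "trace (Phi3 \<mu> (O_plus ** O_plus) ** tensor3 \<rho>) =
      integral\<^sup>L \<mu> (\<lambda>U. trace (tensor3 U ** (O_plus ** O_plus) ** cadj (tensor3 U) ** tensor3 \<rho>))"
    by (rule trace_integral[OF haar])
  also have "\<dots> = integral\<^sup>L \<mu> (\<lambda>U. 4 + ?A * (\<Sum>i\<in>UNIV. qfc i \<rho> U ^ 2) + ?B * (\<Sum>i\<in>UNIV. qfc i \<rho> U ^ 3))"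
  proof (rule integral_cong_AE)
    show "(\<lambda>U. trace (tensor3 U ** (O_plus ** O_plus) ** cadj (tensor3 U) ** tensor3 \<rho>)) \<in> borel_measurable \<mu>"
      by (rule meas) (unfold trace_def matrix_matrix_mult_def tensor3_def cadj_def, intro continuous_intros)
    show "(\<lambda>U. 4 + ?A * (\<Sum>i\<in>UNIV. qfc i \<rho> U ^ 2) + ?B * (\<Sum>i\<in>UNIV. qfc i \<rho> U ^ 3)) \<in> borel_measurable \<mu>"
      by (rule meas) (intro continuous_intros)
    show "AE U in \<mu>. trace (tensor3 U ** (O_plus ** O_plus) ** cadj (tensor3 U) ** tensor3 \<rho>) =
        4 + ?A * (\<Sum>i\<in>UNIV. qfc i \<rho> U ^ 2) + ?B * (\<Sum>i\<in>UNIV. qfc i \<rho> U ^ 3)"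
      using haar_AE_unitary[OF haar] by (rule eventually_mono) (simp add: pointwise[OF _ tr] mult.assoc)
  qed
  also have "\<dots> = 4 + ?A * (\<Sum>i\<in>UNIV. integral\<^sup>L \<mu> (\<lambda>U. qfc i \<rho> U ^ 2))
      + ?B * (\<Sum>i\<in>UNIV. integral\<^sup>L \<mu> (\<lambda>U. qfc i \<rho> U ^ 3))"
  proof -
    have i2: "integrable \<mu> (\<lambda>U. qfc i \<rho> U ^ 2)" for i
      by (rule haar_integrable[OF haar]) (intro continuous_intros)
    have i3: "integrable \<mu> (\<lambda>U. qfc i \<rho> U ^ 3)" for i
      by (rule haar_integrable[OF haar]) (intro continuous_intros)
    have m1: "measure \<mu> (space \<mu>) = 1" using prob_space.prob_space[OF ps] .
    have "integral\<^sup>L \<mu> (\<lambda>U. 4 + ?A * (\<Sum>i\<in>UNIV. qfc i \<rho> U ^ 2) + ?B * (\<Sum>i\<in>UNIV. qfc i \<rho> U ^ 3))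
       = integral\<^sup>L \<mu> (\<lambda>U. 4 + ?A * (\<Sum>i\<in>UNIV. qfc i \<rho> U ^ 2)) + integral\<^sup>L \<mu> (\<lambda>U. ?B * (\<Sum>i\<in>UNIV. qfc i \<rho> U ^ 3))"
      by (intro Bochner_Integration.integral_add haar_integrable[OF haar] continuous_intros)
    also have "integral\<^sup>L \<mu> (\<lambda>U. 4 + ?A * (\<Sum>i\<in>UNIV. qfc i \<rho> U ^ 2))
       = integral\<^sup>L \<mu> (\<lambda>U. 4) + integral\<^sup>L \<mu> (\<lambda>U. ?A * (\<Sum>i\<in>UNIV. qfc i \<rho> U ^ 2))"
      by (intro Bochner_Integration.integral_add haar_integrable[OF haar] continuous_intros)
    also have "integral\<^sup>L \<mu> (\<lambda>U. (4::complex)) = 4" using m1 by simp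
    also have "integral\<^sup>L \<mu> (\<lambda>U. ?A * (\<Sum>i\<in>UNIV. qfc i \<rho> U ^ 2)) = ?A * (\<Sum>i\<in>UNIV. integral\<^sup>L \<mu> (\<lambda>U. qfc i \<rho> U ^ 2))"
    proof -
      have "integral\<^sup>L \<mu> (\<lambda>U. \<Sum>i\<in>UNIV. qfc i \<rho> U ^ 2) = (\<Sum>i\<in>UNIV. integral\<^sup>L \<mu> (\<lambda>U. qfc i \<rho> U ^ 2))"
        by (rule Bochner_Integration.integral_sum) (rule i2)
      thus ?thesis by (simp only: integral_mult_right_zero)
    qed
    also have "integral\<^sup>L \<mu> (\<lambda>U. ?B * (\<Sum>i\<in>UNIV. qfc i \<rho> U ^ 3)) = ?B * (\<Sum>i\<in>UNIV. integral\<^sup>L \<mu> (\<lambda>U. qfc i \<rho> U ^ 3))"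
    proof -
      have "integral\<^sup>L \<mu> (\<lambda>U. \<Sum>i\<in>UNIV. qfc i \<rho> U ^ 3) = (\<Sum>i\<in>UNIV. integral\<^sup>L \<mu> (\<lambda>U. qfc i \<rho> U ^ 3))"
        by (rule Bochner_Integration.integral_sum) (rule i3)
      thus ?thesis by (simp only: integral_mult_right_zero)
    qed
    finally show ?thesis .
  qed
  also have "\<dots> = 4 + ?A * ((of_nat CARD('n)::complex) * ((1 + ?t2) / ((of_nat CARD('n)::complex) * ((of_nat CARD('n)::complex) + 1))))
      + ?B * ((of_nat CARD('n)::complex) * (KK (of_nat CARD('n)::complex) * (1 + 3 * ?t2 + 2 * ?t3)))"
    by (simp add: Eq2[OF haar] Eq3[OF haar] tr)
  also have "\<dots> = 1 / ((of_nat CARD('n)::complex) + 2) * (((of_nat CARD('n)::complex) - 1) * ((of_nat CARD('n)::complex)^2 + 3 * (of_nat CARD('n)::complex) + 4)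
        + 3 * (of_nat CARD('n)::complex) * ((of_nat CARD('n)::complex) - 1) * ((of_nat CARD('n)::complex) + 1) * ?t2 + 2 * ((of_nat CARD('n)::complex)^3 - (of_nat CARD('n)::complex)^2 + 6) * ?t3)"
    using dd_ge_glob by (intro ar_final) auto
  finally show ?thesis .
qed


theorem proposition17:
  fixes \<mu> :: "(complex^'n^'n) measure" and \<rho> :: "complex^'n^'n"
  assumes "CARD('n) \<ge> 2"
    and "haar_unitary \<mu> \<or> unitary_3design \<mu>"
    and "density_op \<rho>"
  shows "trace (Phi3 \<mu> (O_plus ** O_plus) ** tensor3 \<rho>) =
    (let d = (of_nat CARD('n) :: complex) in
     1 / (d + 2) * ((d - 1) * (d^2 + 3 * d + 4)
        + 3 * d * (d - 1) * (d + 1) * trace (\<rho> ** \<rho>)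
        + 2 * (d^3 - d^2 + 6) * trace (\<rho> ** \<rho> ** \<rho>)))"
proof -
  have tr: "trace \<rho> = 1" using assms(3) by (simp add: density_op_def)
  obtain \<nu> where nu: "haar_unitary \<nu>" and eq: "Phi3 \<mu> (O_plus ** O_plus) = Phi3 \<nu> (O_plus ** O_plus)"
  proof (cases "haar_unitary \<mu>")
    case True
    then show ?thesis using that by blast
  next
    case False
    with assms(2) have "unitary_3design \<mu>" by blast
    then obtain \<nu> where "haar_unitary \<nu>" "\<forall>X. Phi3 \<mu> X = Phi3 \<nu> X"
      unfolding unitary_3design_def by blast
    then show ?thesis using that by blast
  qed
  show ?thesis unfolding eq Let_def by (rule main_haar[OF nu tr])
qed

end
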